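(* Let $n\in\mathbb{N}$, $1<p<q$, $0<\omega<\omega_{p,q}$, and let $u$ be a positive solution of $$u''(r)+\frac{n-1}{r}u'(r)+f(u(r))=0\ (r>0),\qquad u'(0)=0,\qquad \lim_{r\to\infty}u(r)=0,$$ where $f(u)=-\omega u+u^p-u^q$. Let $B>0$ be the number such that $\Sigma<0$ on $(0,B)$ and $\Sigma>0$ on $(B,C)$ for some $C\in(B,\infty]$, where $\Sigma(u)=2nF(u)-(n-2)uf(u)$ and $F(u)=\int_0^u f(s)\,ds$. Then $$B<\|u\|_\infty=u(0).$$
   Context: $\omega_{p,q}=\frac{2(q-p)}{(p+1)(q-1)}\left[\frac{(p-1)(q+1)}{(p+1)(q-1)}\right]^{\frac{p-1}{q-p}}$; under $0<\omega<\omega_{p,q}$ a positive solution of the boundary value problem exists and is unique. The number $B$ is the smallest positive zero of $\Sigma$; it exists (with the stated sign pattern) under the hypotheses. *)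

theory Defs
  imports "HOL-Analysis.Analysis"
begin

definition fnl :: "real \<Rightarrow> real \<Rightarrow> real \<Rightarrow> real \<Rightarrow> real" where
  "fnl \<omega> p q s = - \<omega> * s + s powr p - s powr q"

definition Fnl :: "real \<Rightarrow> real \<Rightarrow> real \<Rightarrow> real \<Rightarrow> real" where
  "Fnl \<omega> p q s = integral {0..s} (fnl \<omega> p q)"

definition Sigma :: "nat \<Rightarrow> real \<Rightarrow> real \<Rightarrow> real \<Rightarrow> real \<Rightarrow> real" where
  "Sigma n \<omega> p q s = 2 * real n * Fnl \<omega> p q s - (real n - 2) * s * fnl \<omega> p q s"

definition omega_pq :: "real \<Rightarrow> real \<Rightarrow> real" where
  "omega_pq p q = 2 * (q - p) / ((p + 1) * (q - 1)) *
     (((p - 1) * (q + 1)) / ((p + 1) * (q - 1))) powr ((p - 1) / (q - p))"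

end

theory Submission
  imports Defs
begin


lemma fnl_cont: assumes "0 < p" "0 < q" shows "continuous_on {0..} (fnl \<omega> p q)"
  unfolding fnl_def
  by (intro continuous_intros continuous_on_powr') (use assms in auto)

lemma Fnl_deriv_within:
  assumes "0 < p" "0 < q" "0 \<le> s" "s \<le> b"
  shows "(Fnl \<omega> p q has_real_derivative fnl \<omega> p q s) (at s within {0..b})"
proof -
  have "continuous_on {0..b} (fnl \<omega> p q)"
    using fnl_cont[OF assms(1,2)] by (rule continuous_on_subset) auto
  then show ?thesis unfolding Fnl_def[abs_def]
    using integral_has_real_derivative assms by auto
qed

lemma Fnl_deriv:
  assumes "0 < p" "0 < q" "0 < s"
  shows "(Fnl \<omega> p q has_real_derivative fnl \<omega> p q s) (at s)"
proof -
  have "(Fnl \<omega> p q has_real_derivative fnl \<omega> p q s) (at s within {0..s+1})"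
    by (rule Fnl_deriv_within) (use assms in auto)
  moreover have "at s within {0..s+1} = at s" by (rule at_within_Icc_at) (use assms in auto)
  ultimately show ?thesis by simp
qed

lemma Fnl_cont:
  assumes "0 < p" "0 < q"
  shows "continuous_on {0..b} (Fnl \<omega> p q)"
proof (rule continuous_on_subset[of "{0..max b 0}"])
  show "continuous_on {0..max b 0} (Fnl \<omega> p q)"
    unfolding continuous_on_eq_continuous_within
    using Fnl_deriv_within[OF assms] DERIV_continuous by fastforce
qed auto

lemma Fnl0: "Fnl \<omega> p q 0 = 0" unfolding Fnl_def by simp

lemma MVT3:
  fixes f f' :: "real \<Rightarrow> real"
  assumes "a < b" "continuous_on {a..b} f" "\<And>x. a < x \<Longrightarrow> x < b \<Longrightarrow> DERIV f x :> f' x"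
  shows "\<exists>z. a < z \<and> z < b \<and> f b - f a = (b - a) * f' z"
proof -
  obtain l z where "a < z" "z < b" "DERIV f z :> l" "f b - f a = (b - a) * l"
    using MVT[OF assms(1,2)] assms(3) real_differentiable_def by blast
  then show ?thesis using assms(3) DERIV_unique by metis
qed



definition gq :: "real \<Rightarrow> real \<Rightarrow> real \<Rightarrow> real \<Rightarrow> real" where
  "gq \<omega> p q s = - \<omega> + s powr (p - 1) - s powr (q - 1)"

lemma fnl_gq: "0 < s \<Longrightarrow> fnl \<omega> p q s = s * gq \<omega> p q s"
  unfolding fnl_def gq_def by (simp add: algebra_simps powr_mult_base)

lemma gq_deriv: "0 < z \<Longrightarrow> (gq \<omega> p q has_real_derivative
   z powr (p - 2) * ((p - 1) - (q - 1) * z powr (q - p))) (at z)"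
proof -
  assume z: "0 < z"
  have e: "z powr (q - 2) = z powr (p - 2) * z powr (q - p)" using z by (simp add: powr_add[symmetric])
  have d1: "((\<lambda>z. z powr (p - 1)) has_real_derivative (p - 1) * z powr (p - 1 - 1)) (at z)"
    by (rule has_real_derivative_powr) (use z in simp)
  have d2: "((\<lambda>z. z powr (q - 1)) has_real_derivative (q - 1) * z powr (q - 1 - 1)) (at z)"
    by (rule has_real_derivative_powr) (use z in simp)
  have "((\<lambda>z. - \<omega> + z powr (p - 1) - z powr (q - 1)) has_real_derivative
      0 + (p - 1) * z powr (p - 1 - 1) - (q - 1) * z powr (q - 1 - 1)) (at z)"
    by (intro DERIV_diff DERIV_add DERIV_const d1 d2)
  moreover have "0 + (p - 1) * z powr (p - 1 - 1) - (q - 1) * z powr (q - 1 - 1)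
     = z powr (p - 2) * ((p - 1) - (q - 1) * z powr (q - p))"
    using e by (simp add: algebra_simps)
  ultimately show ?thesis unfolding gq_def[abs_def] by simp
qed

lemma gq_qc:
  assumes pq: "1 < p" "p < q" and yx: "0 < y" "y < x" "x < s"
  shows "gq \<omega> p q x > min (gq \<omega> p q y) (gq \<omega> p q s)"
proof (cases "(q - 1) * x powr (q - p) \<le> p - 1")
  case True
  have "\<exists>z. y < z \<and> z < x \<and> gq \<omega> p q x - gq \<omega> p q y = (x - y) * (z powr (p - 2) * ((p - 1) - (q - 1) * z powr (q - p)))"
    by (rule MVT2) (use yx gq_deriv in auto)
  then obtain z where z: "y < z" "z < x" "gq \<omega> p q x - gq \<omega> p q y = (x - y) * (z powr (p - 2) * ((p - 1) - (q - 1) * z powr (q - p)))" by blast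
  have "z powr (q - p) < x powr (q - p)" by (rule powr_less_mono2) (use z yx pq in auto)
  then have "(q - 1) * z powr (q - p) < (q - 1) * x powr (q - p)" using pq by simp
  then have "(q - 1) * z powr (q - p) < p - 1" using True by linarith
  then have a: "(p - 1) - (q - 1) * z powr (q - p) > 0" by linarith
  have b: "z powr (p - 2) > 0" using z yx by simp
  have c: "z powr (p - 2) * ((p - 1) - (q - 1) * z powr (q - p)) > 0" using b a by (rule mult_pos_pos)
  have "(x - y) * (z powr (p - 2) * ((p - 1) - (q - 1) * z powr (q - p))) > 0"
    using mult_pos_pos[of "x - y", OF _ c] z by simp
  then have "gq \<omega> p q x - gq \<omega> p q y > 0" using z(3) by linarith
  then show ?thesis by simp
next
  case False
  have "\<exists>z. x < z \<and> z < s \<and> gq \<omega> p q s - gq \<omega> p q x = (s - x) * (z powr (p - 2) * ((p - 1) - (q - 1) * z powr (q - p)))"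
    by (rule MVT2) (use yx gq_deriv in auto)
  then obtain z where z: "x < z" "z < s" "gq \<omega> p q s - gq \<omega> p q x = (s - x) * (z powr (p - 2) * ((p - 1) - (q - 1) * z powr (q - p)))" by blast
  have "x powr (q - p) < z powr (q - p)" by (rule powr_less_mono2) (use z yx pq in auto)
  then have "(q - 1) * x powr (q - p) < (q - 1) * z powr (q - p)" using pq by simp
  then have "(q - 1) * z powr (q - p) > p - 1" using False by linarith
  then have a: "(p - 1) - (q - 1) * z powr (q - p) < 0" by linarith
  have b: "z powr (p - 2) > 0" using z yx by simp
  have c: "z powr (p - 2) * ((p - 1) - (q - 1) * z powr (q - p)) < 0" using b a by (rule mult_pos_neg)
  have "(s - x) * (z powr (p - 2) * ((p - 1) - (q - 1) * z powr (q - p))) < 0"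
    using mult_pos_neg[of "s - x", OF _ c] z by simp
  then have "gq \<omega> p q s - gq \<omega> p q x < 0" using z(3) by linarith
  then show ?thesis by simp
qed

lemma shape:
  assumes pq: "1 < p" "p < q" and ts: "0 < t" "t < s" and fs: "fnl \<omega> p q s \<ge> 0"
  shows "Fnl \<omega> p q t < Fnl \<omega> p q s \<or> Fnl \<omega> p q t < 0"
proof -
  have pq0: "0 < p" "0 < q" using pq by auto
  have cF: "continuous_on {a..b} (Fnl \<omega> p q)" if "0 \<le> a" for a b
    by (rule continuous_on_subset[OF Fnl_cont[OF pq0, of b]]) (use that in auto)
  obtain \<xi> where xi: "t < \<xi>" "\<xi> < s" "Fnl \<omega> p q s - Fnl \<omega> p q t = (s - t) * fnl \<omega> p q \<xi>"
    using MVT3[of t s "Fnl \<omega> p q" "fnl \<omega> p q"] ts cF Fnl_deriv[OF pq0] by force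
  obtain \<eta> where eta: "0 < \<eta>" "\<eta> < t" "Fnl \<omega> p q t - Fnl \<omega> p q 0 = (t - 0) * fnl \<omega> p q \<eta>"
    using MVT3[of 0 t "Fnl \<omega> p q" "fnl \<omega> p q"] ts cF Fnl_deriv[OF pq0] by force
  show ?thesis
  proof (cases "fnl \<omega> p q \<xi> > 0")
    case True
    have "(s - t) * fnl \<omega> p q \<xi> > 0" using True xi by simp
    with xi(3) show ?thesis by linarith
  next
    case False
    have gx: "gq \<omega> p q \<xi> \<le> 0"
    proof (rule ccontr)
      assume "\<not> gq \<omega> p q \<xi> \<le> 0"
      then have "\<xi> * gq \<omega> p q \<xi> > 0" using xi ts by simp
      then show False using False fnl_gq[of \<xi>] xi ts by simp
    qed
    have gs: "gq \<omega> p q s \<ge> 0"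
    proof (rule ccontr)
      assume "\<not> gq \<omega> p q s \<ge> 0"
      then have "s * gq \<omega> p q s < 0" using ts by (simp add: mult_pos_neg)
      then show False using fs fnl_gq[of s] ts by simp
    qed
    have "gq \<omega> p q \<xi> > min (gq \<omega> p q \<eta>) (gq \<omega> p q s)"
      by (rule gq_qc) (use pq eta xi in auto)
    then have "gq \<omega> p q \<eta> < 0" using gx gs by auto
    then have "fnl \<omega> p q \<eta> < 0" using fnl_gq[of \<eta>] eta by (simp add: mult_pos_neg)
    then show ?thesis using eta by (simp add: Fnl0 mult_pos_neg)
  qed
qed



lemma DERIV_eq: "(f has_real_derivative D) F \<Longrightarrow> D = D' \<Longrightarrow> (f has_real_derivative D') F" by simp

lemma alg:
  fixes r a x y z Fv fv :: real
  assumes "r > 0" "n = Suc m" "z = - (real m / r * y) - fv"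
  shows "real n * a * (y * y + 2 * Fv) + (r * a) * (z * y + y * z + 2 * (fv * y))
     + (real n - 2) * (real m * a / r * (x * y) + a * (y * y + x * z))
     = a * (2 * real n * Fv - (real n - 2) * x * fv)"
  unfolding assms(3) using assms(1,2) by (simp add: field_simps)

lemma pow_exp_lim:
  assumes k: "(k::real) > 0"
  shows "((\<lambda>x. x ^ j * exp (- k * x)) \<longlongrightarrow> 0) at_top"
proof -
  have fk: "filterlim (\<lambda>x. k * x) at_top at_top"
    by (rule filterlim_tendsto_pos_mult_at_top[OF tendsto_const k filterlim_ident])
  have "((\<lambda>x. (k * x) ^ j / exp (k * x)) \<longlongrightarrow> 0) at_top"
    using filterlim_compose[OF tendsto_power_div_exp_0[of j] fk] by simp
  then have "((\<lambda>x. (k * x) ^ j / exp (k * x) / k ^ j) \<longlongrightarrow> 0) at_top"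
    by (rule tendsto_divide_zero)
  moreover have "(k * x) ^ j / exp (k * x) / k ^ j = x ^ j * exp (- k * x)" for x
    using k by (simp add: power_mult_distrib exp_minus field_simps)
  ultimately show ?thesis by simp
qed

lemma f_small:
  assumes pq: "1 < p" "p < q" and om: "0 < \<omega>"
  obtains \<delta> where "0 < \<delta>" "\<delta> \<le> 1"
    "\<And>s. 0 < s \<Longrightarrow> s < \<delta> \<Longrightarrow> fnl \<omega> p q s \<le> - (\<omega> / 2) * s"
    "\<And>s. 0 < s \<Longrightarrow> s < \<delta> \<Longrightarrow> \<bar>fnl \<omega> p q s\<bar> \<le> (\<omega> + 1) * s"
    "\<And>s. 0 < s \<Longrightarrow> s < \<delta> \<Longrightarrow> \<bar>Fnl \<omega> p q s\<bar> \<le> (\<omega> + 1) * s"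
proof -
  define \<delta> where "\<delta> = min 1 ((\<omega> / 2) powr (1 / (p - 1)))"
  have dpos: "0 < \<delta>" "\<delta> \<le> 1" using om unfolding \<delta>_def by auto
  have f1: "fnl \<omega> p q s \<le> - (\<omega> / 2) * s" if s: "0 < s" "s < \<delta>" for s
  proof -
    have "s powr (p - 1) < ((\<omega> / 2) powr (1 / (p - 1))) powr (p - 1)"
      by (rule powr_less_mono2) (use s pq in \<open>auto simp: \<delta>_def\<close>)
    also have "\<dots> = \<omega> / 2" using pq om by (simp add: powr_powr)
    finally have "s powr (p - 1) < \<omega> / 2" .
    moreover have "s powr (q - 1) \<ge> 0" by simp
    ultimately have "gq \<omega> p q s \<le> - (\<omega> / 2)" unfolding gq_def by linarith
    then have "s * gq \<omega> p q s \<le> s * (- (\<omega> / 2))" using s by (intro mult_left_mono) auto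
    then show ?thesis using fnl_gq[of s] s by (simp add: algebra_simps)
  qed
  have f2: "\<bar>fnl \<omega> p q s\<bar> \<le> (\<omega> + 1) * s" if s: "0 < s" "s < \<delta>" for s
  proof -
    have "s powr q \<le> s" by (rule powr_le_one_le) (use s dpos pq in auto)
    moreover have "s powr p \<ge> 0" by simp
    ultimately have "fnl \<omega> p q s \<ge> - \<omega> * s - s" unfolding fnl_def by linarith
    then have "fnl \<omega> p q s \<ge> - (\<omega> + 1) * s" by (simp add: algebra_simps)
    moreover have "fnl \<omega> p q s \<le> 0"
    proof -
      have "(\<omega> / 2) * s > 0" using s om by simp
      then show ?thesis using f1[OF s] by linarith
    qed
    ultimately show ?thesis by (simp add: algebra_simps)
  qed
  have f3: "\<bar>Fnl \<omega> p q s\<bar> \<le> (\<omega> + 1) * s" if s: "0 < s" "s < \<delta>" for s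
  proof -
    have pq0: "0 < p" "0 < q" using pq by auto
    have cF: "continuous_on {0..s} (Fnl \<omega> p q)" by (rule Fnl_cont[OF pq0])
    obtain \<eta> where eta: "0 < \<eta>" "\<eta> < s" "Fnl \<omega> p q s - Fnl \<omega> p q 0 = (s - 0) * fnl \<omega> p q \<eta>"
      using MVT3[of 0 s "Fnl \<omega> p q" "fnl \<omega> p q"] s cF Fnl_deriv[OF pq0] by force
    have "\<bar>fnl \<omega> p q \<eta>\<bar> \<le> (\<omega> + 1) * \<eta>" using f2 eta s by auto
    also have "\<dots> \<le> (\<omega> + 1)" using eta s dpos om by auto
    finally have "\<bar>fnl \<omega> p q \<eta>\<bar> \<le> \<omega> + 1" .
    then have "s * \<bar>fnl \<omega> p q \<eta>\<bar> \<le> s * (\<omega> + 1)" using s by (intro mult_left_mono) auto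
    then show ?thesis using eta s by (simp add: Fnl0 abs_mult algebra_simps)
  qed
  show ?thesis using that dpos f1 f2 f3 by blast
qed



theorem theorem2:
  fixes n :: nat and p q \<omega> B :: real and u u' u'' :: "real \<Rightarrow> real"
  assumes n: "n \<ge> 1"
    and pq: "1 < p" "p < q"
    and om: "0 < \<omega>" "\<omega> < omega_pq p q"
    and pos: "\<forall>r\<ge>0. u r > 0"
    and d1: "\<forall>r>0. (u has_real_derivative u' r) (at r)"
    and d2: "\<forall>r>0. (u' has_real_derivative u'' r) (at r)"
    and ode: "\<forall>r>0. u'' r + (real n - 1) / r * u' r + fnl \<omega> p q (u r) = 0"
    and d0: "(u has_real_derivative 0) (at 0 within {0..})"
    and lim: "(u \<longlongrightarrow> 0) at_top"
    and Bpos: "B > 0"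
    and Bneg: "\<forall>s. 0 < s \<and> s < B \<longrightarrow> Sigma n \<omega> p q s < 0"
    and Bposr: "\<exists>C>B. \<forall>s. B < s \<and> s < C \<longrightarrow> Sigma n \<omega> p q s > 0"
  shows "B < (SUP r\<in>{0..}. u r) \<and> (SUP r\<in>{0..}. u r) = u 0"
proof -
  have pq0: "0 < p" "0 < q" using pq by auto
  obtain m where nm: "n = Suc m" using n by (cases n) auto
  have rm: "real n - 1 = real m" using nm by simp
  have ode': "u'' r = - (real m / r * u' r) - fnl \<omega> p q (u r)" if "r > 0" for r
  proof -
    have "u'' r + (real n - 1) / r * u' r + fnl \<omega> p q (u r) = 0" using ode that by blast
    then have "u'' r + real m / r * u' r + fnl \<omega> p q (u r) = 0" by (simp only: rm)
    then show ?thesis by linarith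
  qed
  have contu: "continuous_on {a..b} u" if "0 \<le> a" for a b
  proof -
    have "continuous (at x within {a..b}) u" if "x \<in> {a..b}" for x
    proof (cases "x = 0")
      case True
      have "continuous (at 0 within {0..}) u" using d0 by (rule DERIV_continuous)
      moreover have "{a..b} \<subseteq> {0..}" using \<open>0 \<le> a\<close> by auto
      ultimately show ?thesis using True continuous_within_subset by blast
    next
      case False
      then have "x > 0" using that \<open>0 \<le> a\<close> by auto
      then show ?thesis using d1 DERIV_continuous continuous_at_imp_continuous_within by blast
    qed
    then show ?thesis by (simp add: continuous_on_eq_continuous_within)
  qed
  have contu': "continuous_on {a..b} u'" if "0 < a" for a b
  proof (intro continuous_at_imp_continuous_on ballI)
    fix x assume "x \<in> {a..b}"
    then have "x > 0" using that by auto
    then show "isCont u' x" using d2 DERIV_isCont by blast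
  qed
  have u0pos: "u 0 > 0" using pos by auto
  have posr: "u r > 0" if "r \<ge> 0" for r using pos that by blast
  define rr :: "nat \<Rightarrow> real" where "rr k = inverse (real (Suc k))" for k
  have rrpos: "rr k > 0" for k unfolding rr_def by simp
  have "\<exists>z. 0 < z \<and> z < rr k \<and> u (rr k) - u 0 = (rr k - 0) * u' z" for k
    by (rule MVT3) (use rrpos contu d1 in auto)
  then obtain \<xi> where xi: "\<And>k. 0 < \<xi> k" "\<And>k. \<xi> k < rr k" "\<And>k. u (rr k) - u 0 = rr k * u' (\<xi> k)"
    by (metis diff_zero)
  have rr0: "rr \<longlonglongrightarrow> 0" unfolding rr_def by (rule LIMSEQ_inverse_real_of_nat)
  have xi0: "\<xi> \<longlonglongrightarrow> 0"
    by (rule tendsto_sandwich[OF _ _ tendsto_const rr0]) (use xi in \<open>auto intro!: always_eventually less_imp_le\<close>)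
  have u'xi: "(\<lambda>k. u' (\<xi> k)) \<longlonglongrightarrow> 0"
  proof -
    have "((\<lambda>y. (u y - u 0) / (y - 0)) \<longlongrightarrow> 0) (at 0 within {0..})"
      using d0 by (simp add: has_field_derivative_iff)
    moreover have "filterlim rr (at 0 within {0..}) sequentially"
    proof -
      have "\<forall>k. rr k \<in> {0..} \<and> rr k \<noteq> 0" using rrpos by (metis atLeast_iff less_imp_le less_irrefl)
      then show ?thesis unfolding filterlim_at using rr0 by (simp add: always_eventually)
    qed
    ultimately have "(\<lambda>k. (u (rr k) - u 0) / (rr k - 0)) \<longlonglongrightarrow> 0"
      by (rule filterlim_compose)
    moreover have "(u (rr k) - u 0) / (rr k - 0) = u' (\<xi> k)" for k
      using xi(3)[of k] rrpos[of k] by simp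
    ultimately show ?thesis by simp
  qed
  have xiw: "filterlim \<xi> (at 0 within {0..}) sequentially"
  proof -
    have "\<forall>k. \<xi> k \<in> {0..} \<and> \<xi> k \<noteq> 0" using xi(1) by (metis atLeast_iff less_imp_le less_irrefl)
    then show ?thesis unfolding filterlim_at using xi0 by (simp add: always_eventually)
  qed
  have uxi: "(\<lambda>k. u (\<xi> k)) \<longlonglongrightarrow> u 0"
  proof -
    have "(u \<longlongrightarrow> u 0) (at 0 within {0..})"
      using DERIV_continuous[OF d0] by (simp add: continuous_within)
    then show ?thesis using xiw by (rule filterlim_compose)
  qed

  define E where "E r = u' r * u' r / 2 + Fnl \<omega> p q (u r)" for r
  have dE: "(E has_real_derivative - (real m / r) * (u' r * u' r)) (at r)" if r: "r > 0" for r
  proof -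
    have h1: "((\<lambda>r. u' r * u' r / 2) has_real_derivative (u'' r * u' r + u' r * u'' r) / 2) (at r)"
    proof -
      have d2r: "(u' has_real_derivative u'' r) (at r)" using d2 r by blast
      show ?thesis by (rule DERIV_eq[OF DERIV_cdivide[OF DERIV_mult[OF d2r d2r]]]) (simp add: algebra_simps)
    qed
    have h2: "((\<lambda>r. Fnl \<omega> p q (u r)) has_real_derivative fnl \<omega> p q (u r) * u' r) (at r)"
      using Fnl_deriv[OF pq0, of "u r"] pos r d1 by (intro DERIV_chain2) auto
    have "(E has_real_derivative (u'' r * u' r + u' r * u'' r) / 2 + fnl \<omega> p q (u r) * u' r) (at r)"
      unfolding E_def[abs_def] using h1 h2 by (rule DERIV_add)
    moreover have "(u'' r * u' r + u' r * u'' r) / 2 + fnl \<omega> p q (u r) * u' r = - (real m / r) * (u' r * u' r)"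
      using r by (simp add: ode'[OF r] field_simps)
    ultimately show ?thesis by simp
  qed
  have Emono: "E b \<le> E a" if "0 < a" "a \<le> b" for a b
  proof (rule DERIV_nonpos_imp_nonincreasing[OF that(2)])
    fix x assume "a \<le> x" "x \<le> b"
    then have x: "x > 0" using that by auto
    have "real m / x * (u' x * u' x) \<ge> 0" using x by (simp add: mult_nonneg_nonneg)
    then show "\<exists>y. DERIV E x :> y \<and> y \<le> 0" using dE[OF x] by (intro exI[of _ "- (real m / x) * (u' x * u' x)"]) auto
  qed
  obtain \<delta> where del: "0 < \<delta>" "\<delta> \<le> 1"
    "\<And>s. 0 < s \<Longrightarrow> s < \<delta> \<Longrightarrow> fnl \<omega> p q s \<le> - (\<omega> / 2) * s"
    "\<And>s. 0 < s \<Longrightarrow> s < \<delta> \<Longrightarrow> \<bar>fnl \<omega> p q s\<bar> \<le> (\<omega> + 1) * s"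
    "\<And>s. 0 < s \<Longrightarrow> s < \<delta> \<Longrightarrow> \<bar>Fnl \<omega> p q s\<bar> \<le> (\<omega> + 1) * s"
    using f_small[OF pq om(1)] by blast
  obtain R0 where R0: "R0 \<ge> 1" "\<And>r. r \<ge> R0 \<Longrightarrow> u r < \<delta>"
  proof -
    have "eventually (\<lambda>r. u r < \<delta>) at_top" using order_tendstoD(2)[OF lim del(1)] .
    then obtain N where "\<And>r. r \<ge> N \<Longrightarrow> u r < \<delta>" by (auto simp: eventually_at_top_linorder)
    then show ?thesis using that[of "max N 1"] by auto
  qed
  have fneg: "fnl \<omega> p q (u r) \<le> - (\<omega> / 2) * u r" if "r \<ge> R0" for r
    using del(3)[of "u r"] R0 that pos by auto
  define w where "w r = r ^ m * u' r" for r
  have dw: "(w has_real_derivative - (r ^ m * fnl \<omega> p q (u r))) (at r)" if r: "r > 0" for r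
  proof -
    have "(w has_real_derivative real m * r ^ (m - 1) * u' r + r ^ m * u'' r) (at r)"
    proof -
      have d2r: "(u' has_real_derivative u'' r) (at r)" using d2 r by blast
      show ?thesis unfolding w_def[abs_def]
        by (rule DERIV_eq[OF DERIV_mult[OF DERIV_pow d2r]]) (simp add: algebra_simps)
    qed
    moreover have "real m * r ^ (m - 1) * u' r + r ^ m * u'' r = - (r ^ m * fnl \<omega> p q (u r))"
    proof -
      have e: "real m * r ^ (m - 1) = real m * r ^ m / r" using r by (cases m) auto
      have "real m * r ^ (m - 1) * u' r + r ^ m * u'' r = real m * r ^ m / r * u' r + r ^ m * u'' r"
        by (simp only: e)
      also have "\<dots> = - (r ^ m * fnl \<omega> p q (u r))" using r by (simp add: ode'[OF r] field_simps)
      finally show ?thesis .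
    qed
    ultimately show ?thesis by simp
  qed
  have u'neg: "u' r < 0" if r: "r \<ge> R0" for r
  proof (rule ccontr)
    assume "\<not> u' r < 0"
    then have wr: "w r \<ge> 0" unfolding w_def using r R0 by simp
    have u'pos: "u' x > 0" if x: "x > r" for x
    proof -
      obtain z where z: "r < z" "z < x" "w x - w r = (x - r) * (- (z ^ m * fnl \<omega> p q (u z)))"
        using MVT2[OF x, of w "\<lambda>z. - (z ^ m * fnl \<omega> p q (u z))"] dw r R0 by force
      have "fnl \<omega> p q (u z) < 0"
      proof -
        have "- (\<omega> / 2) * u z < 0" using pos om z r R0 by simp
        then show ?thesis using fneg[of z] z r by linarith
      qed
      then have "z ^ m * fnl \<omega> p q (u z) < 0" using z r R0 by (simp add: mult_pos_neg)
      then have "(x - r) * (z ^ m * fnl \<omega> p q (u z)) < 0" using z by (simp add: mult_pos_neg)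
      then have "w x > w r" using z(3) by linarith
      then have "x ^ m * u' x > 0" using wr unfolding w_def by linarith
      then show ?thesis using x r R0 by (simp add: zero_less_mult_iff)
    qed
    have mono: "u (r + 1) \<le> u x" if "x \<ge> r + 1" for x
    proof (rule DERIV_nonneg_imp_nondecreasing[OF that])
      fix y assume "r + 1 \<le> y" "y \<le> x"
      then have y: "y > r" "y > 0" using r R0 by auto
      show "\<exists>d. DERIV u y :> d \<and> 0 \<le> d"
        using d1 y u'pos[OF y(1)] by (intro exI[of _ "u' y"]) auto
    qed
    have "eventually (\<lambda>x. u x < u (r + 1)) at_top"
      using order_tendstoD(2)[OF lim] pos r R0 by simp
    then obtain N where N: "\<And>x. x \<ge> N \<Longrightarrow> u x < u (r + 1)" by (auto simp: eventually_at_top_linorder)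
    show False using mono[of "max N (r + 1)"] N[of "max N (r + 1)"] by simp
  qed

  define k where "k = sqrt (\<omega> / 2)"
  have kpos: "k > 0" using om by (simp add: k_def)
  have kk: "k * k = \<omega> / 2" using om by (simp add: k_def)
  have dexp: "((\<lambda>x. exp (c * x)) has_real_derivative exp (c * x) * c) (at x)" for c x
    by (rule DERIV_eq[OF DERIV_chain2[OF DERIV_exp DERIV_cmult[OF DERIV_ident]]]) simp
  have u''ge: "u'' r \<ge> k * k * u r" if r: "r \<ge> R0" for r
  proof -
    have r0: "r > 0" using r R0 by auto
    have "real m / r * u' r \<le> 0"
      using mult_nonneg_nonpos[of "real m / r" "u' r"] u'neg[OF r] r0 by simp
    moreover have "k * k * u r = (\<omega> / 2) * u r" using kk by simp
    moreover have "- (\<omega> / 2) * u r = - ((\<omega> / 2) * u r)" by simp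
    ultimately show ?thesis using ode'[OF r0] fneg[OF r] by linarith
  qed
  have gneg: "u' r + k * u r \<le> 0" if r: "r \<ge> R0" for r
  proof (rule ccontr)
    assume "\<not> u' r + k * u r \<le> 0"
    then have G: "u' r + k * u r > 0" by simp
    define h where "h x = exp (- k * x) * (u' x + k * u x)" for x
    have dh: "(h has_real_derivative exp (- k * x) * (u'' x - k * k * u x)) (at x)" if x: "x > 0" for x
    proof -
      have e2: "((\<lambda>x. u' x + k * u x) has_real_derivative u'' x + k * u' x) (at x)"
        using d1 d2 x by (intro DERIV_add DERIV_cmult) auto
      show ?thesis unfolding h_def[abs_def]
        by (rule DERIV_eq[OF DERIV_mult[OF dexp e2]]) (simp add: algebra_simps)
    qed
    have hmono: "h r \<le> h x" if "x \<ge> r" for x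
    proof (rule DERIV_nonneg_imp_nondecreasing[OF that])
      fix y assume "r \<le> y" "y \<le> x"
      then have y: "y \<ge> R0" "y > 0" using r R0 by auto
      have "u'' y - k * k * u y \<ge> 0" using u''ge[OF y(1)] by simp
      then show "\<exists>d. DERIV h y :> d \<and> 0 \<le> d"
        using dh[OF y(2)] by (intro exI[of _ "exp (- k * y) * (u'' y - k * k * u y)"]) simp
    qed
    have big: "u x > (u' r + k * u r) / k" if x: "x \<ge> r" for x
    proof -
      have "exp (- k * r) * (u' r + k * u r) \<le> exp (- k * x) * (u' x + k * u x)"
        using hmono[OF x] unfolding h_def .
      then have "exp (k * x) * (exp (- k * r) * (u' r + k * u r)) \<le> exp (k * x) * (exp (- k * x) * (u' x + k * u x))"
        by (rule mult_left_mono) simp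
      also have "\<dots> = u' x + k * u x" by (simp add: exp_minus field_simps)
      finally have A: "exp (k * x - k * r) * (u' r + k * u r) \<le> u' x + k * u x"
        by (simp add: exp_diff exp_minus field_simps)
      have "1 \<le> exp (k * x - k * r)" using x kpos by (simp add: algebra_simps)
      then have "(u' r + k * u r) \<le> exp (k * x - k * r) * (u' r + k * u r)"
        using G by (simp add: mult_le_cancel_right1)
      then have "u' r + k * u r \<le> u' x + k * u x" using A by linarith
      moreover have "u' x < 0" using u'neg x r by simp
      ultimately have "u' r + k * u r < k * u x" by linarith
      then show ?thesis using kpos by (simp add: field_simps)
    qed
    have "eventually (\<lambda>x. u x < (u' r + k * u r) / k) at_top"
      using order_tendstoD(2)[OF lim] G kpos by simp
    then obtain N where N: "\<And>x. x \<ge> N \<Longrightarrow> u x < (u' r + k * u r) / k" by (auto simp: eventually_at_top_linorder)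
    show False using big[of "max N r"] N[of "max N r"] by simp
  qed
  define Cu where "Cu = exp (k * R0) * u R0"
  have udec: "u x \<le> Cu * exp (- k * x)" if x: "x \<ge> R0" for x
  proof -
    define e where "e y = exp (k * y) * u y" for y
    have "e x \<le> e R0"
    proof (rule DERIV_nonpos_imp_nonincreasing[OF x])
      fix y assume "R0 \<le> y" "y \<le> x"
      then have y: "y \<ge> R0" "y > 0" using R0 by auto
      have "(e has_real_derivative exp (k * y) * (u' y + k * u y)) (at y)"
        unfolding e_def[abs_def] using d1 y
        by (intro DERIV_eq[OF DERIV_mult[OF dexp]]) (auto simp: algebra_simps)
      moreover have "exp (k * y) * (u' y + k * u y) \<le> 0" using gneg[OF y(1)] by (simp add: mult_nonneg_nonpos)
      ultimately show "\<exists>d. DERIV e y :> d \<and> d \<le> 0" by blast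
    qed
    then have "exp (- k * x) * (exp (k * x) * u x) \<le> exp (- k * x) * (exp (k * R0) * u R0)"
      unfolding e_def by (rule mult_left_mono) simp
    then show ?thesis unfolding Cu_def by (simp add: exp_minus field_simps)
  qed
  define C2 where "C2 = Cu * exp k"
  have u'dec: "\<bar>u' x\<bar> \<le> C2 * exp (- k * x)" if x: "x \<ge> R0 + 1" for x
  proof -
    obtain z where z: "x - 1 < z" "z < x" "u x - u (x - 1) = (x - (x - 1)) * u' z"
      using MVT2[of "x - 1" x u u'] d1 x R0 by force
    have "u' z \<le> u' x"
    proof (rule DERIV_nonneg_imp_nondecreasing[of z x])
      show "z \<le> x" using z by simp
      fix y assume "z \<le> y" "y \<le> x"
      then have y: "y \<ge> R0" "y > 0" using z x R0 by auto
      have "u y > 0" using pos y by simp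
      then have "k * k * u y \<ge> 0" by simp
      then show "\<exists>d. DERIV u' y :> d \<and> 0 \<le> d"
        using d2 y u''ge[OF y(1)] by (intro exI[of _ "u'' y"]) auto
    qed
    then have "- u' x \<le> u (x - 1) - u x" using z by simp
    also have "\<dots> \<le> u (x - 1)" using posr[of x] x R0 by simp
    also have "\<dots> \<le> Cu * exp (- k * (x - 1))" using udec x by simp
    also have "\<dots> = C2 * exp (- k * x)" unfolding C2_def by (simp add: algebra_simps exp_add[symmetric])
    finally show ?thesis using u'neg[of x] x by simp
  qed

  have ex0: "((\<lambda>x. exp (- k * x)) \<longlongrightarrow> 0) at_top" using pow_exp_lim[OF kpos, of 0] by simp
  have Cupos: "Cu > 0" unfolding Cu_def using posr[of R0] R0 by simp
  have C2pos: "C2 > 0" unfolding C2_def using Cupos by simp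
  have ebnd: "exp (- k * x) * exp (- k * x) \<le> exp (- k * x)" if "x \<ge> 0" for x
  proof -
    have "exp (- k * x) \<le> 1" using that kpos by simp
    then show ?thesis using mult_left_mono[of "exp (- k * x)" 1 "exp (- k * x)"] by simp
  qed
  have Fub: "\<bar>Fnl \<omega> p q (u x)\<bar> \<le> (\<omega> + 1) * (Cu * exp (- k * x))" if x: "x \<ge> R0" for x
  proof -
    have "\<bar>Fnl \<omega> p q (u x)\<bar> \<le> (\<omega> + 1) * u x"
      using del(5)[of "u x"] posr[of x] R0(2)[OF x] x R0 by simp
    also have "\<dots> \<le> (\<omega> + 1) * (Cu * exp (- k * x))"
      using udec[OF x] om by (intro mult_left_mono) auto
    finally show ?thesis .
  qed
  have u'sq: "\<bar>u' x * u' x\<bar> \<le> C2 * C2 * exp (- k * x)" if x: "x \<ge> R0 + 1" for x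
  proof -
    have "\<bar>u' x * u' x\<bar> = \<bar>u' x\<bar> * \<bar>u' x\<bar>" by (simp add: abs_mult)
    also have "\<dots> \<le> (C2 * exp (- k * x)) * (C2 * exp (- k * x))"
      using u'dec[OF x] by (intro mult_mono) auto
    also have "\<dots> = C2 * C2 * (exp (- k * x) * exp (- k * x))" by simp
    also have "\<dots> \<le> C2 * C2 * exp (- k * x)"
      using ebnd[of x] x R0 C2pos by (intro mult_left_mono) auto
    finally show ?thesis .
  qed
  have Elim: "(E \<longlongrightarrow> 0) at_top"
  proof (rule Lim_null_comparison)
    show "eventually (\<lambda>x. norm (E x) \<le> (C2 * C2 / 2 + (\<omega> + 1) * Cu) * exp (- k * x)) at_top"
      unfolding eventually_at_top_linorder
    proof (intro exI allI impI)
      fix x assume x: "x \<ge> R0 + 1"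
      have "norm (E x) \<le> \<bar>u' x * u' x\<bar> / 2 + \<bar>Fnl \<omega> p q (u x)\<bar>" unfolding E_def
        using abs_triangle_ineq[of "u' x * u' x / 2" "Fnl \<omega> p q (u x)"] by simp
      also have "\<dots> \<le> C2 * C2 * exp (- k * x) / 2 + (\<omega> + 1) * (Cu * exp (- k * x))"
        using u'sq[OF x] Fub[of x] x by simp
      also have "\<dots> = (C2 * C2 / 2 + (\<omega> + 1) * Cu) * exp (- k * x)" by (simp add: algebra_simps)
      finally show "norm (E x) \<le> (C2 * C2 / 2 + (\<omega> + 1) * Cu) * exp (- k * x)" .
    qed
    show "((\<lambda>x. (C2 * C2 / 2 + (\<omega> + 1) * Cu) * exp (- k * x)) \<longlongrightarrow> 0) at_top"
      using tendsto_mult[OF tendsto_const ex0, of "C2 * C2 / 2 + (\<omega> + 1) * Cu"] by simp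
  qed
  have Ege: "E r \<ge> 0" if r: "r > 0" for r
  proof (rule tendsto_upperbound[OF Elim])
    show "eventually (\<lambda>x. E x \<le> E r) at_top"
      unfolding eventually_at_top_linorder using Emono r by blast
  qed simp
  have isF0: "isCont (Fnl \<omega> p q) (u 0)" using DERIV_isCont[OF Fnl_deriv[OF pq0 u0pos]] .
  have Exi: "(\<lambda>k. E (\<xi> k)) \<longlonglongrightarrow> Fnl \<omega> p q (u 0)"
  proof -
    have "(\<lambda>k. u' (\<xi> k) * u' (\<xi> k) / 2 + Fnl \<omega> p q (u (\<xi> k))) \<longlonglongrightarrow> 0 * 0 / 2 + Fnl \<omega> p q (u 0)"
      by (intro tendsto_add tendsto_divide tendsto_mult u'xi tendsto_const isCont_tendsto_compose[OF isF0 uxi]) simp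
    then show ?thesis unfolding E_def by simp
  qed
  have Ele: "E r \<le> Fnl \<omega> p q (u 0)" if r: "r > 0" for r
  proof (rule tendsto_lowerbound[OF Exi])
    show "eventually (\<lambda>k. E r \<le> E (\<xi> k)) sequentially"
      using order_tendstoD(2)[OF xi0 r] by eventually_elim (use Emono xi(1) in auto)
  qed simp
  have F0ge: "Fnl \<omega> p q (u 0) \<ge> 0"
    by (rule tendsto_lowerbound[OF Exi]) (use Ege xi(1) in auto)
  have umax: "u r \<le> u 0" if r: "r \<ge> 0" for r
  proof -
    have "eventually (\<lambda>x. u x < u 0) at_top" using order_tendstoD(2)[OF lim u0pos] .
    then obtain R1 where R1': "\<And>x. x \<ge> R1 \<Longrightarrow> u x < u 0" by (auto simp: eventually_at_top_linorder)
    define R2 where "R2 = max R1 0"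
    have R2: "R2 \<ge> 0" "\<And>x. x \<ge> R2 \<Longrightarrow> u x < u 0" using R1' by (auto simp: R2_def)
    obtain rm where rm: "rm \<in> {0..R2}" "\<forall>y\<in>{0..R2}. u y \<le> u rm"
      using continuous_attains_sup[of "{0..R2}" u] contu[of 0 R2] R2 by auto
    have all: "u y \<le> u rm" if "y \<ge> 0" for y
    proof (cases "y \<le> R2")
      case True then show ?thesis using rm that by auto
    next
      case False then have "u y < u 0" using R2 by auto
      moreover have "u 0 \<le> u rm" using rm R2 by auto
      ultimately show ?thesis by simp
    qed
    have "u rm \<le> u 0"
    proof (rule ccontr)
      assume A: "\<not> u rm \<le> u 0"
      then have rmpos: "rm > 0" using rm by (cases "rm = 0") auto
      have d1rm: "DERIV u rm :> u' rm" using d1 rmpos by blast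
      have u'0: "u' rm = 0"
      proof (rule DERIV_local_max[OF d1rm rmpos])
        show "\<forall>y. \<bar>rm - y\<bar> < rm \<longrightarrow> u y \<le> u rm"
        proof (intro allI impI)
          fix y assume "\<bar>rm - y\<bar> < rm"
          then have "y \<ge> 0" by (simp add: abs_less_iff)
          then show "u y \<le> u rm" by (rule all)
        qed
      qed
      have u''le: "u'' rm \<le> 0"
      proof (rule ccontr)
        assume "\<not> u'' rm \<le> 0"
        then have "u'' rm > 0" by simp
        moreover have "DERIV u' rm :> u'' rm" using d2 rmpos by blast
        ultimately obtain d where d: "d > 0" "\<And>h. h > 0 \<Longrightarrow> h < d \<Longrightarrow> u' rm < u' (rm + h)"
          using DERIV_pos_inc_right by blast
        obtain z where z: "rm < z" "z < rm + d / 2" "u (rm + d / 2) - u rm = (rm + d / 2 - rm) * u' z"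
          using MVT2[of rm "rm + d / 2" u u'] d1 rmpos d by force
        have "u' z > 0" using d(2)[of "z - rm"] z u'0 by auto
        then have "(rm + d / 2 - rm) * u' z > 0" using d by simp
        then have "u (rm + d / 2) > u rm" using z(3) by linarith
        with all[of "rm + d / 2"] rmpos d show False by auto
      qed
      have fM: "fnl \<omega> p q (u rm) \<ge> 0" using ode'[OF rmpos] u'0 u''le by simp
      have "E rm = Fnl \<omega> p q (u rm)" unfolding E_def using u'0 by simp
      then have le: "Fnl \<omega> p q (u rm) \<le> Fnl \<omega> p q (u 0)" using Ele[OF rmpos] by simp
      have "Fnl \<omega> p q (u 0) < Fnl \<omega> p q (u rm) \<or> Fnl \<omega> p q (u 0) < 0"
        by (rule shape[OF pq u0pos _ fM]) (use A in simp)
      then show False using le F0ge by linarith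
    qed
    then show ?thesis using all[OF r] by simp
  qed
  have SUPeq: "(SUP r\<in>{0..}. u r) = u 0"
    by (rule cSup_eq_maximum) (use umax in auto)
  have Blt: "B < u 0"
  proof (rule ccontr)
    assume "\<not> B < u 0"
    then have u0B: "u 0 \<le> B" by simp
    have isf: "isCont (fnl \<omega> p q) s" if s: "s > 0" for s
    proof -
      have "continuous_on {0<..} (fnl \<omega> p q)"
        using fnl_cont[OF pq0, of \<omega>] by (rule continuous_on_subset) auto
      then show ?thesis using s by (simp add: continuous_on_eq_continuous_at)
    qed
    have isS: "isCont (Sigma n \<omega> p q) B"
    proof -
      have "isCont (Fnl \<omega> p q) B" using DERIV_isCont[OF Fnl_deriv[OF pq0 Bpos]] .
      then show ?thesis unfolding Sigma_def[abs_def] using isf[OF Bpos]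
        by (intro continuous_intros) auto
    qed
    have SB: "Sigma n \<omega> p q B \<le> 0"
    proof (rule tendsto_upperbound)
      show "(Sigma n \<omega> p q \<longlongrightarrow> Sigma n \<omega> p q B) (at_left B)"
        using tendsto_within_subset[OF isS[unfolded isCont_def], of "{..<B}"] by simp
      show "eventually (\<lambda>s. Sigma n \<omega> p q s \<le> 0) (at_left B)"
        using eventually_at_left_real[OF Bpos] by eventually_elim (use Bneg in auto)
    qed simp
    have Sneg: "Sigma n \<omega> p q (u r) \<le> 0" if r: "r > 0" for r
    proof (cases "u r < B")
      case True
      then show ?thesis using Bneg posr[of r] r by auto
    next
      case False
      then have "u r = B" using umax[of r] r u0B by simp
      then show ?thesis using SB by simp
    qed
    define P where "P r = r ^ n * (u' r * u' r + 2 * Fnl \<omega> p q (u r)) + (real n - 2) * (r ^ m * (u r * u' r))" for r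
    have dP: "(P has_real_derivative r ^ m * Sigma n \<omega> p q (u r)) (at r)" if r: "r > 0" for r
    proof -
      have d1r: "DERIV u r :> u' r" using d1 r by blast
      have d2r: "DERIV u' r :> u'' r" using d2 r by blast
      have dFr: "((\<lambda>r. Fnl \<omega> p q (u r)) has_real_derivative fnl \<omega> p q (u r) * u' r) (at r)"
        using Fnl_deriv[OF pq0, of "u r"] posr[of r] r d1r by (intro DERIV_chain2) auto
      have h1: "((\<lambda>r. r ^ n) has_real_derivative real n * r ^ m) (at r)"
        by (rule DERIV_eq[OF DERIV_pow]) (simp add: nm)
      have h2: "((\<lambda>r. u' r * u' r + 2 * Fnl \<omega> p q (u r)) has_real_derivative
          (u'' r * u' r + u'' r * u' r) + 2 * (fnl \<omega> p q (u r) * u' r)) (at r)"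
        by (rule DERIV_add[OF DERIV_mult[OF d2r d2r] DERIV_cmult[OF dFr]])
      have h3: "((\<lambda>r. r ^ m) has_real_derivative real m * r ^ m / r) (at r)"
        by (rule DERIV_eq[OF DERIV_pow]) (use r in \<open>cases m; simp add: field_simps\<close>)
      have h4: "((\<lambda>r. u r * u' r) has_real_derivative u' r * u' r + u'' r * u r) (at r)"
        by (rule DERIV_mult[OF d1r d2r])
      have "(P has_real_derivative (real n * r ^ m) * (u' r * u' r + 2 * Fnl \<omega> p q (u r))
          + ((u'' r * u' r + u'' r * u' r) + 2 * (fnl \<omega> p q (u r) * u' r)) * r ^ n
          + (real n - 2) * ((real m * r ^ m / r) * (u r * u' r) + (u' r * u' r + u'' r * u r) * r ^ m)) (at r)"
        unfolding P_def[abs_def]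
        by (rule DERIV_add[OF DERIV_mult[OF h1 h2] DERIV_cmult[OF DERIV_mult[OF h3 h4]]])
      moreover have "(real n * r ^ m) * (u' r * u' r + 2 * Fnl \<omega> p q (u r))
          + ((u'' r * u' r + u'' r * u' r) + 2 * (fnl \<omega> p q (u r) * u' r)) * r ^ n
          + (real n - 2) * ((real m * r ^ m / r) * (u r * u' r) + (u' r * u' r + u'' r * u r) * r ^ m)
          = r ^ m * Sigma n \<omega> p q (u r)"
      proof -
        have A: "real n * r ^ m * (u' r * u' r + 2 * Fnl \<omega> p q (u r)) + (r * r ^ m) * (u'' r * u' r + u' r * u'' r + 2 * (fnl \<omega> p q (u r) * u' r))
           + (real n - 2) * (real m * r ^ m / r * (u r * u' r) + r ^ m * (u' r * u' r + u r * u'' r))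
           = r ^ m * (2 * real n * Fnl \<omega> p q (u r) - (real n - 2) * u r * fnl \<omega> p q (u r))"
          by (rule alg[OF r nm ode'[OF r]])
        show ?thesis unfolding Sigma_def using A by (simp add: nm algebra_simps)
      qed
      ultimately show ?thesis by simp
    qed
    have Pmono: "P b \<le> P a" if "0 < a" "a \<le> b" for a b
    proof (rule DERIV_nonpos_imp_nonincreasing[OF that(2)])
      fix x assume "a \<le> x" "x \<le> b"
      then have x: "x > 0" using that by auto
      have "x ^ m * Sigma n \<omega> p q (u x) \<le> 0"
        using mult_nonneg_nonpos[of "x ^ m" "Sigma n \<omega> p q (u x)"] Sneg[OF x] x by simp
      then show "\<exists>y. DERIV P x :> y \<and> y \<le> 0" using dP[OF x] by blast
    qed
    have Pxi: "(\<lambda>k. P (\<xi> k)) \<longlonglongrightarrow> 0"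
    proof -
      have "(\<lambda>k. \<xi> k ^ n * (u' (\<xi> k) * u' (\<xi> k) + 2 * Fnl \<omega> p q (u (\<xi> k))) + (real n - 2) * (\<xi> k ^ m * (u (\<xi> k) * u' (\<xi> k))))
          \<longlonglongrightarrow> 0 ^ n * (0 * 0 + 2 * Fnl \<omega> p q (u 0)) + (real n - 2) * (0 ^ m * (u 0 * 0))"
        by (intro tendsto_intros xi0 u'xi uxi isCont_tendsto_compose[OF isF0 uxi])
      then show ?thesis unfolding P_def by (simp add: nm)
    qed
    have Ple: "P r \<le> 0" if r: "r > 0" for r
    proof (rule tendsto_lowerbound[OF Pxi])
      show "eventually (\<lambda>k. P r \<le> P (\<xi> k)) sequentially"
        using order_tendstoD(2)[OF xi0 r] by eventually_elim (use Pmono xi(1) in auto)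
    qed simp
    define K where "K = C2 * C2 + 2 * (\<omega> + 1) * Cu + \<bar>real n - 2\<bar> * (Cu * C2)"
    have Plim: "(P \<longlongrightarrow> 0) at_top"
    proof (rule Lim_null_comparison)
      show "eventually (\<lambda>x. norm (P x) \<le> K * (x ^ n * exp (- k * x))) at_top"
        unfolding eventually_at_top_linorder
      proof (intro exI allI impI)
        fix x assume x: "x \<ge> R0 + 1"
        define e where "e = exp (- k * x)"
        have x1: "x \<ge> 1" using x R0 by simp
        have epos: "e > 0" unfolding e_def by simp
        have xm: "x ^ m \<le> x ^ n" using x1 nm by (simp add: power_increasing)
        have b1: "\<bar>u' x * u' x + 2 * Fnl \<omega> p q (u x)\<bar> \<le> (C2 * C2 + 2 * (\<omega> + 1) * Cu) * e"
        proof -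
          have "\<bar>u' x * u' x + 2 * Fnl \<omega> p q (u x)\<bar> \<le> \<bar>u' x * u' x\<bar> + 2 * \<bar>Fnl \<omega> p q (u x)\<bar>"
            using abs_triangle_ineq[of "u' x * u' x" "2 * Fnl \<omega> p q (u x)"] by (simp add: abs_mult)
          also have "\<dots> \<le> C2 * C2 * e + 2 * ((\<omega> + 1) * (Cu * e))"
            using u'sq[OF x] Fub[of x] x unfolding e_def by simp
          finally show ?thesis by (simp add: algebra_simps)
        qed
        have b2: "\<bar>u x * u' x\<bar> \<le> Cu * C2 * e"
        proof -
          have "\<bar>u x * u' x\<bar> = \<bar>u x\<bar> * \<bar>u' x\<bar>" by (simp add: abs_mult)
          also have "\<dots> \<le> (Cu * e) * (C2 * e)"
            using udec[of x] u'dec[OF x] posr[of x] x R0 unfolding e_def by (intro mult_mono) auto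
          also have "\<dots> = Cu * C2 * (e * e)" by simp
          also have "\<dots> \<le> Cu * C2 * e"
            using ebnd[of x] x R0 Cupos C2pos unfolding e_def by (intro mult_left_mono) auto
          finally show ?thesis .
        qed
        have "norm (P x) \<le> x ^ n * \<bar>u' x * u' x + 2 * Fnl \<omega> p q (u x)\<bar> + \<bar>real n - 2\<bar> * (x ^ m * \<bar>u x * u' x\<bar>)"
          unfolding P_def using x1 abs_triangle_ineq[of "x ^ n * (u' x * u' x + 2 * Fnl \<omega> p q (u x))" "(real n - 2) * (x ^ m * (u x * u' x))"]
          by (simp add: abs_mult)
        also have "\<dots> \<le> x ^ n * ((C2 * C2 + 2 * (\<omega> + 1) * Cu) * e) + \<bar>real n - 2\<bar> * (x ^ n * (Cu * C2 * e))"
        proof (intro add_mono mult_left_mono mult_mono b1 b2 xm)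
        qed (use x1 epos Cupos C2pos in auto)
        also have "\<dots> = K * (x ^ n * e)" unfolding K_def by (simp add: algebra_simps)
        finally show "norm (P x) \<le> K * (x ^ n * exp (- k * x))" unfolding e_def .
      qed
      show "((\<lambda>x. K * (x ^ n * exp (- k * x))) \<longlongrightarrow> 0) at_top"
        using tendsto_mult[OF tendsto_const pow_exp_lim[OF kpos, of n], of K] by simp
    qed
    have "eventually (\<lambda>x. u x < B) at_top" using order_tendstoD(2)[OF lim Bpos] .
    then obtain R3' where R3': "\<And>x. x \<ge> R3' \<Longrightarrow> u x < B" by (auto simp: eventually_at_top_linorder)
    define R3 where "R3 = max R3' 1"
    have R3: "R3 \<ge> 1" "\<And>x. x \<ge> R3 \<Longrightarrow> u x < B" using R3' by (auto simp: R3_def)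
    obtain z where z: "R3 < z" "z < R3 + 1" "P (R3 + 1) - P R3 = (R3 + 1 - R3) * (z ^ m * Sigma n \<omega> p q (u z))"
      using MVT2[of R3 "R3 + 1" P "\<lambda>z. z ^ m * Sigma n \<omega> p q (u z)"] dP R3 by force
    have "Sigma n \<omega> p q (u z) < 0" using Bneg posr[of z] R3(2)[of z] z R3 by auto
    then have "z ^ m * Sigma n \<omega> p q (u z) < 0" using z R3 by (simp add: mult_pos_neg)
    then have lt: "P (R3 + 1) < P R3" using z(3) by simp
    have "0 \<le> P (R3 + 1)"
    proof (rule tendsto_upperbound[OF Plim])
      show "eventually (\<lambda>x. P x \<le> P (R3 + 1)) at_top"
        unfolding eventually_at_top_linorder using Pmono R3 by (intro exI[of _ "R3 + 1"]) auto
    qed simp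
    moreover have "P R3 \<le> 0" using Ple R3 by simp
    ultimately show False using lt by simp
  qed
  show ?thesis using SUPeq Blt by simp
qed

end
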